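(* ($\Rightarrow_{\mathrm{AP}}$ is a Terminating Over-Approximation.) Let $N$ be a finite set of constrained clauses. (i) There is no infinite sequence $N=N_0\Rightarrow_{\mathrm{AP}}N_1\Rightarrow_{\mathrm{AP}}N_2\Rightarrow_{\mathrm{AP}}\cdots$ (i.e. $\Rightarrow_{\mathrm{AP}}^*$ terminates). (ii) If $N\Rightarrow_{\mathrm{AP}}N'$ and $N'$ is satisfiable, then $N$ is satisfiable.
   Context: Clauses are written $\Gamma\rightarrow\Delta$ with $\Gamma,\Delta$ finite multisets of atoms (negative resp. positive literals); $\dot\cup$ denotes disjoint union. For an atom or term $E$, $E[s]_p$ means $E|_p=s$ and $E[p/s']$ the result of replacing the subterm at position $p$ by $s'$; $E[x]_{p,q}$ means $x$ occurs at positions $p$ and $q$. A term is complex if it is not a variable. A variable and a constant are straight; $f(s_1,\dots,s_n)$ is straight if the $s_i$ are pairwise distinct variables except for at most one straight argument. A constraint $\pi=\bigwedge_i t_i\neq s_i$ is a finite conjunction of disequations ($t_i,s_i$ variable-disjoint, $s_i$ straight); $\pi\sigma=\bigwedge_i t_i\sigma\neq s_i$; a solution is a grounding substitution $\delta$ with no $t_i\delta$ an instance of $s_i$. A constrained clause is $(C;\pi)$; its ground instances are $C\delta$ for solutions $\delta$ of $\pi$ grounding all variables of $C$ and the $t_i$; a Herbrand interpretation $I$ (set of ground atoms) satisfies a ground clause $\Gamma\rightarrow\Delta$ if $\Delta\cap I\neq\emptyset$ or $\Gamma\not\subseteq I$, satisfies $(C;\pi)$ if it satisfies all its ground instances; a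 set is satisfiable if it has such a model. Clauses in a set are assumed pairwise variable-disjoint. Fix a monadic predicate $T$ fresh to $N$ and, for each non-monadic predicate $P$, a function symbol $f_P$ fresh to $N$. $\mathrm{Proj}_P^T$ maps an atom $P(t_1,\dots,t_n)$ to $T(f_P(t_1,\dots,t_n))$ and leaves atoms with other predicates unchanged; it is extended to (constrained) clauses and clause sets. The transformation rules are: Monadic (MO): $N\Rightarrow\mathrm{Proj}_P^T(N)$, provided $P$ is a non-monadic predicate in the signature of $N$. Shallow (SH): $N\,\dot\cup\,\{(\Gamma\rightarrow E[s]_p,\Delta;\pi)\}\Rightarrow N\cup\{(S(x),\Gamma_l\rightarrow E[p/x],\Delta_l;\pi),\ (\Gamma_r\rightarrow S(s),\Delta_r;\pi)\}$, provided $s$ is complex, $|p|=2$, $x$ is a fresh variable and $S$ a fresh monadic predicate, $\Gamma_l\{x\mapsto s\}\cup\Gamma_r=\Gamma$, $\Delta_l\cup\Delta_r=\Delta$, $\{Q(y)\in\Gamma\mid y\in\mathrm{vars}(E[p/x],\Delta_l)\}\subseteq\Gamma_l$ and $\{Q(y)\in\Gamma\mid y\in\mathrm{vars}(s,\Delta_r)\}\subseteq\Gamma_r$. Linear 1 (LI): $N\,\dot\cup\,\{(\Gamma\rightarrow\Delta,E'[x]_p,E[x]_q;\pi)\}\Rightarrow N\cup\{(\Gamma\sigma,\Gamma\rightarrow\Delta,E'[x]_p,E[q/x'];\pi\wedge\pi\sigma)\}$, with $x'$ fresh and $\sigma=\{x\mapsto x'\}$. Linear 2 (LI): $N\,\dot\cup\,\{(\Gamma\rightarrow\Delta,E[x]_{p,q};\pi)\}\Rightarrow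 N\cup\{(\Gamma\sigma,\Gamma\rightarrow\Delta,E[q/x'];\pi\wedge\pi\sigma)\}$, with $x'$ fresh, $p\neq q$, $\sigma=\{x\mapsto x'\}$. Refinement (Ref): $N\,\dot\cup\,\{(C;\pi)\}\Rightarrow N\cup\{(C;\pi\wedge x\neq t),(C;\pi)\{x\mapsto t\}\}$, provided $x\in\mathrm{vars}(C)$, $t$ is straight and $\mathrm{vars}(t)\cap\mathrm{vars}((C;\pi))=\emptyset$. $\Rightarrow_{\mathrm{AP}}$ is the priority rewrite system consisting of these rules with priority Ref $>$ MO $>$ SH $>$ LI (a rule is applied only if no higher-priority rule is applicable), where Ref is applied only finitely many times. *)

theory Defs
  imports Main "HOL-Library.Multiset"
begin

text \<open>Untyped first-order terms; a function symbol is a name together with the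
  number of its arguments, likewise a predicate.  The Herbrand universe is the set
  of all ground terms.\<close>

datatype ('f, 'v) trm = Var 'v | Fun 'f "('f, 'v) trm list"

datatype ('p, 'f, 'v) atom = Atom 'p "('f, 'v) trm list"

fun vars_t :: "('f, 'v) trm \<Rightarrow> 'v set" where
  "vars_t (Var x) = {x}"
| "vars_t (Fun f ts) = \<Union> (set (map vars_t ts))"

fun funs_t :: "('f, 'v) trm \<Rightarrow> ('f \<times> nat) set" where
  "funs_t (Var x) = {}"
| "funs_t (Fun f ts) = insert (f, length ts) (\<Union> (set (map funs_t ts)))"

fun tsubst :: "('v \<Rightarrow> ('f, 'v) trm) \<Rightarrow> ('f, 'v) trm \<Rightarrow> ('f, 'v) trm" where
  "tsubst \<sigma> (Var x) = \<sigma> x"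
| "tsubst \<sigma> (Fun f ts) = Fun f (map (tsubst \<sigma>) ts)"

definition ground_t :: "('f, 'v) trm \<Rightarrow> bool" where
  "ground_t t \<longleftrightarrow> vars_t t = {}"

text \<open>Positions: lists of (0-based) argument indices.\<close>

fun term_at :: "('f, 'v) trm \<Rightarrow> nat list \<Rightarrow> ('f, 'v) trm option" where
  "term_at t [] = Some t"
| "term_at (Var x) (i # p) = None"
| "term_at (Fun f ts) (i # p) = (if i < length ts then term_at (ts ! i) p else None)"

fun replace_at :: "('f, 'v) trm \<Rightarrow> nat list \<Rightarrow> ('f, 'v) trm \<Rightarrow> ('f, 'v) trm" where
  "replace_at t [] s = s"
| "replace_at (Var x) (i # p) s = Var x"
| "replace_at (Fun f ts) (i # p) s = Fun f (ts[i := replace_at (ts ! i) p s])"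

text \<open>Positions in atoms: the first index selects the argument of the predicate.\<close>

fun atom_at :: "('p, 'f, 'v) atom \<Rightarrow> nat list \<Rightarrow> ('f, 'v) trm option" where
  "atom_at (Atom P ts) [] = None"
| "atom_at (Atom P ts) (i # p) = (if i < length ts then term_at (ts ! i) p else None)"

fun atom_replace :: "('p, 'f, 'v) atom \<Rightarrow> nat list \<Rightarrow> ('f, 'v) trm \<Rightarrow> ('p, 'f, 'v) atom" where
  "atom_replace (Atom P ts) [] s = Atom P ts"
| "atom_replace (Atom P ts) (i # p) s = Atom P (ts[i := replace_at (ts ! i) p s])"

fun vars_a :: "('p, 'f, 'v) atom \<Rightarrow> 'v set" where
  "vars_a (Atom P ts) = \<Union> (set (map vars_t ts))"

fun funs_a :: "('p, 'f, 'v) atom \<Rightarrow> ('f \<times> nat) set" where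
  "funs_a (Atom P ts) = \<Union> (set (map funs_t ts))"

fun pred_a :: "('p, 'f, 'v) atom \<Rightarrow> 'p \<times> nat" where
  "pred_a (Atom P ts) = (P, length ts)"

fun asubst :: "('v \<Rightarrow> ('f, 'v) trm) \<Rightarrow> ('p, 'f, 'v) atom \<Rightarrow> ('p, 'f, 'v) atom" where
  "asubst \<sigma> (Atom P ts) = Atom P (map (tsubst \<sigma>) ts)"

definition ground_a :: "('p, 'f, 'v) atom \<Rightarrow> bool" where
  "ground_a A \<longleftrightarrow> vars_a A = {}"

inductive straight :: "('f, 'v) trm \<Rightarrow> bool" where
  straight_Var: "straight (Var x)"
| straight_vars: "distinct xs \<Longrightarrow> straight (Fun f (map Var xs))"
| straight_one: "straight s \<Longrightarrow> distinct (xs @ ys) \<Longrightarrow>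
    straight (Fun f (map Var xs @ s # map Var ys))"

text \<open>A clause \<open>\<Gamma> \<rightarrow> \<Delta>\<close> is a pair of multisets of atoms; a constraint
  \<open>\<And>i t_i \<noteq> s_i\<close> is the list of pairs \<open>(t_i, s_i)\<close>; conjunction is append.\<close>

type_synonym ('p, 'f, 'v) clause = "('p, 'f, 'v) atom multiset \<times> ('p, 'f, 'v) atom multiset"
type_synonym ('f, 'v) constr = "(('f, 'v) trm \<times> ('f, 'v) trm) list"
type_synonym ('p, 'f, 'v) cclause = "('p, 'f, 'v) clause \<times> ('f, 'v) constr"

definition vars_ms :: "('p, 'f, 'v) atom multiset \<Rightarrow> 'v set" where
  "vars_ms M = \<Union> (vars_a ` set_mset M)"

fun vars_cl :: "('p, 'f, 'v) clause \<Rightarrow> 'v set" where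
  "vars_cl (\<Gamma>, \<Delta>) = vars_ms \<Gamma> \<union> vars_ms \<Delta>"

definition vars_lhs :: "('f, 'v) constr \<Rightarrow> 'v set" where
  "vars_lhs \<pi> = \<Union> ((\<lambda>(t, s). vars_t t) ` set \<pi>)"

definition vars_constr :: "('f, 'v) constr \<Rightarrow> 'v set" where
  "vars_constr \<pi> = \<Union> ((\<lambda>(t, s). vars_t t \<union> vars_t s) ` set \<pi>)"

fun vars_cc :: "('p, 'f, 'v) cclause \<Rightarrow> 'v set" where
  "vars_cc (C, \<pi>) = vars_cl C \<union> vars_constr \<pi>"

fun csubst :: "('v \<Rightarrow> ('f, 'v) trm) \<Rightarrow> ('p, 'f, 'v) clause \<Rightarrow> ('p, 'f, 'v) clause" where
  "csubst \<sigma> (\<Gamma>, \<Delta>) = (image_mset (asubst \<sigma>) \<Gamma>, image_mset (asubst \<sigma>) \<Delta>)"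

definition constr_subst :: "('v \<Rightarrow> ('f, 'v) trm) \<Rightarrow> ('f, 'v) constr \<Rightarrow> ('f, 'v) constr" where
  "constr_subst \<sigma> \<pi> = map (\<lambda>(t, s). (tsubst \<sigma> t, s)) \<pi>"

definition wf_constr :: "('f, 'v) constr \<Rightarrow> bool" where
  "wf_constr \<pi> \<longleftrightarrow> (\<forall>(t, s) \<in> set \<pi>. vars_t t \<inter> vars_t s = {} \<and> straight s)"

fun wf_cclause :: "('p, 'f, 'v) cclause \<Rightarrow> bool" where
  "wf_cclause (C, \<pi>) = wf_constr \<pi>"

fun preds_cc :: "('p, 'f, 'v) cclause \<Rightarrow> ('p \<times> nat) set" where
  "preds_cc ((\<Gamma>, \<Delta>), \<pi>) = pred_a ` set_mset (\<Gamma> + \<Delta>)"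

fun funs_cc :: "('p, 'f, 'v) cclause \<Rightarrow> ('f \<times> nat) set" where
  "funs_cc ((\<Gamma>, \<Delta>), \<pi>) = \<Union> (funs_a ` set_mset (\<Gamma> + \<Delta>))
     \<union> \<Union> ((\<lambda>(t, s). funs_t t \<union> funs_t s) ` set \<pi>)"

definition preds :: "('p, 'f, 'v) cclause set \<Rightarrow> ('p \<times> nat) set" where
  "preds N = \<Union> (preds_cc ` N)"

definition funs :: "('p, 'f, 'v) cclause set \<Rightarrow> ('f \<times> nat) set" where
  "funs N = \<Union> (funs_cc ` N)"

definition grounding_on :: "('v \<Rightarrow> ('f, 'v) trm) \<Rightarrow> 'v set \<Rightarrow> bool" where
  "grounding_on \<delta> V \<longleftrightarrow> (\<forall>v \<in> V. ground_t (\<delta> v))"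

definition is_solution :: "('v \<Rightarrow> ('f, 'v) trm) \<Rightarrow> ('f, 'v) constr \<Rightarrow> bool" where
  "is_solution \<delta> \<pi> \<longleftrightarrow> (\<forall>(t, s) \<in> set \<pi>. \<not> (\<exists>\<tau>. tsubst \<tau> s = tsubst \<delta> t))"

fun sat_ground :: "('p, 'f, 'v) atom set \<Rightarrow> ('p, 'f, 'v) clause \<Rightarrow> bool" where
  "sat_ground I (\<Gamma>, \<Delta>) \<longleftrightarrow> (\<exists>A \<in># \<Delta>. A \<in> I) \<or> \<not> set_mset \<Gamma> \<subseteq> I"

fun sat_cc :: "('p, 'f, 'v) atom set \<Rightarrow> ('p, 'f, 'v) cclause \<Rightarrow> bool" where
  "sat_cc I (C, \<pi>) \<longleftrightarrow>
     (\<forall>\<delta>. grounding_on \<delta> (vars_cl C \<union> vars_lhs \<pi>) \<and> is_solution \<delta> \<pi>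
           \<longrightarrow> sat_ground I (csubst \<delta> C))"

definition satisfiable :: "('p, 'f, 'v) cclause set \<Rightarrow> bool" where
  "satisfiable N \<longleftrightarrow> (\<exists>I. (\<forall>A \<in> I. ground_a A) \<and> (\<forall>C \<in> N. sat_cc I C))"

fun proj_a :: "'p \<Rightarrow> ('p \<times> nat \<Rightarrow> 'f) \<Rightarrow> 'p \<times> nat \<Rightarrow> ('p, 'f, 'v) atom \<Rightarrow> ('p, 'f, 'v) atom" where
  "proj_a T fP P (Atom p ts) =
     (if (p, length ts) = P then Atom T [Fun (fP P) ts] else Atom p ts)"

fun proj_cc :: "'p \<Rightarrow> ('p \<times> nat \<Rightarrow> 'f) \<Rightarrow> 'p \<times> nat \<Rightarrow> ('p, 'f, 'v) cclause \<Rightarrow> ('p, 'f, 'v) cclause" where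
  "proj_cc T fP P ((\<Gamma>, \<Delta>), \<pi>) =
     ((image_mset (proj_a T fP P) \<Gamma>, image_mset (proj_a T fP P) \<Delta>), \<pi>)"

definition MO_step :: "'p \<Rightarrow> ('p \<times> nat \<Rightarrow> 'f) \<Rightarrow> ('p, 'f, 'v) cclause set \<Rightarrow> ('p, 'f, 'v) cclause set \<Rightarrow> bool" where
  "MO_step T fP N N' \<longleftrightarrow>
     (\<exists>P \<in> preds N. snd P \<noteq> 1 \<and> N' = proj_cc T fP P ` N)"

definition SH_step :: "'p \<Rightarrow> ('p, 'f, 'v) cclause set \<Rightarrow> ('p, 'f, 'v) cclause set \<Rightarrow> bool" where
  "SH_step T N N' \<longleftrightarrow>
     (\<exists>\<Gamma> \<Delta> E p s \<pi> x S \<Gamma>l \<Delta>l \<Gamma>r \<Delta>r.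
        ((\<Gamma>, add_mset E \<Delta>), \<pi>) \<in> N \<and>
        atom_at E p = Some s \<and> (\<exists>f ts. s = Fun f ts) \<and> length p = 2 \<and>
        x \<notin> vars_cc ((\<Gamma>, add_mset E \<Delta>), \<pi>) \<and>
        (S, 1) \<notin> preds N \<and> S \<noteq> T \<and>
        image_mset (asubst (Var(x := s))) \<Gamma>l \<union># \<Gamma>r = \<Gamma> \<and>
        \<Delta>l \<union># \<Delta>r = \<Delta> \<and>
        (\<forall>Q y. Atom Q [Var y] \<in># \<Gamma> \<and> y \<in> vars_a (atom_replace E p (Var x)) \<union> vars_ms \<Delta>l
            \<longrightarrow> Atom Q [Var y] \<in># \<Gamma>l) \<and>
        (\<forall>Q y. Atom Q [Var y] \<in># \<Gamma> \<and> y \<in> vars_t s \<union> vars_ms \<Delta>r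
            \<longrightarrow> Atom Q [Var y] \<in># \<Gamma>r) \<and>
        N' = (N - {((\<Gamma>, add_mset E \<Delta>), \<pi>)}) \<union>
             {((add_mset (Atom S [Var x]) \<Gamma>l, add_mset (atom_replace E p (Var x)) \<Delta>l), \<pi>),
              ((\<Gamma>r, add_mset (Atom S [s]) \<Delta>r), \<pi>)})"

definition LI1_step :: "('p, 'f, 'v) cclause set \<Rightarrow> ('p, 'f, 'v) cclause set \<Rightarrow> bool" where
  "LI1_step N N' \<longleftrightarrow>
     (\<exists>\<Gamma> \<Delta> E' E p q x x' \<pi>.
        ((\<Gamma>, \<Delta> + {#E', E#}), \<pi>) \<in> N \<and>
        atom_at E' p = Some (Var x) \<and> atom_at E q = Some (Var x) \<and>
        x' \<notin> vars_cc ((\<Gamma>, \<Delta> + {#E', E#}), \<pi>) \<and>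
        N' = (N - {((\<Gamma>, \<Delta> + {#E', E#}), \<pi>)}) \<union>
             {((image_mset (asubst (Var(x := Var x'))) \<Gamma> + \<Gamma>,
                \<Delta> + {#E', atom_replace E q (Var x')#}),
               \<pi> @ constr_subst (Var(x := Var x')) \<pi>)})"

definition LI2_step :: "('p, 'f, 'v) cclause set \<Rightarrow> ('p, 'f, 'v) cclause set \<Rightarrow> bool" where
  "LI2_step N N' \<longleftrightarrow>
     (\<exists>\<Gamma> \<Delta> E p q x x' \<pi>.
        ((\<Gamma>, add_mset E \<Delta>), \<pi>) \<in> N \<and>
        atom_at E p = Some (Var x) \<and> atom_at E q = Some (Var x) \<and> p \<noteq> q \<and>
        x' \<notin> vars_cc ((\<Gamma>, add_mset E \<Delta>), \<pi>) \<and>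
        N' = (N - {((\<Gamma>, add_mset E \<Delta>), \<pi>)}) \<union>
             {((image_mset (asubst (Var(x := Var x'))) \<Gamma> + \<Gamma>,
                add_mset (atom_replace E q (Var x')) \<Delta>),
               \<pi> @ constr_subst (Var(x := Var x')) \<pi>)})"

definition Ref_step :: "('p, 'f, 'v) cclause set \<Rightarrow> ('p, 'f, 'v) cclause set \<Rightarrow> bool" where
  "Ref_step N N' \<longleftrightarrow>
     (\<exists>C \<pi> x t.
        (C, \<pi>) \<in> N \<and> x \<in> vars_cl C \<and> straight t \<and>
        vars_t t \<inter> vars_cc (C, \<pi>) = {} \<and>
        N' = (N - {(C, \<pi>)}) \<union>
             {(C, \<pi> @ [(Var x, t)]),
              (csubst (Var(x := t)) C, constr_subst (Var(x := t)) \<pi>)})"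

text \<open>Priority MO > SH > LI among the non-Ref rules; Ref may be applied at any
  time (its finiteness is imposed on sequences in the theorem).\<close>

definition AP_noref_step :: "'p \<Rightarrow> ('p \<times> nat \<Rightarrow> 'f) \<Rightarrow> ('p, 'f, 'v) cclause set \<Rightarrow> ('p, 'f, 'v) cclause set \<Rightarrow> bool" where
  "AP_noref_step T fP N N' \<longleftrightarrow>
     MO_step T fP N N' \<or>
     (SH_step T N N' \<and> \<not> (\<exists>M. MO_step T fP N M)) \<or>
     ((LI1_step N N' \<or> LI2_step N N') \<and> \<not> (\<exists>M. MO_step T fP N M) \<and> \<not> (\<exists>M. SH_step T N M))"

definition AP_step :: "'p \<Rightarrow> ('p \<times> nat \<Rightarrow> 'f) \<Rightarrow> ('p, 'f, 'v) cclause set \<Rightarrow> ('p, 'f, 'v) cclause set \<Rightarrow> bool" where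
  "AP_step T fP N N' \<longleftrightarrow> Ref_step N N' \<or> AP_noref_step T fP N N'"

end

theory Submission
  imports Defs
begin


fun fn :: "('f, 'v) trm \<Rightarrow> nat" where
  "fn (Var x) = 0"
| "fn (Fun f ts) = Suc (sum_list (map fn ts))"

fun oc :: "'v \<Rightarrow> ('f, 'v) trm \<Rightarrow> nat" where
  "oc v (Var y) = (if v = y then 1 else 0)"
| "oc v (Fun f ts) = sum_list (map (oc v) ts)"

lemma sum_list_upd: "i < length xs \<Longrightarrow> sum_list (xs[i := a]) + xs ! i = sum_list xs + (a::nat)"
  by (induction xs arbitrary: i) (auto split: nat.splits)

lemma fn_replace: "term_at t q = Some u \<Longrightarrow> fn (replace_at t q s) + fn u = fn t + fn s"
proof (induction t arbitrary: q)
  case (Var x)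
  then show ?case by (cases q) auto
next
  case (Fun f ts)
  show ?case
  proof (cases q)
    case Nil then show ?thesis using Fun by auto
  next
    case (Cons i q')
    with Fun.prems have i: "i < length ts" and t: "term_at (ts ! i) q' = Some u" by (auto split: if_splits)
    have ih: "fn (replace_at (ts ! i) q' s) + fn u = fn (ts ! i) + fn s"
      using Fun.IH[OF nth_mem[OF i] t] .
    have "sum_list ((map fn ts)[i := fn (replace_at (ts ! i) q' s)]) + map fn ts ! i
       = sum_list (map fn ts) + fn (replace_at (ts ! i) q' s)"
      using i by (intro sum_list_upd) simp
    then show ?thesis using Cons i ih by (simp add: map_update)
  qed
qed

lemma oc_replace: "term_at t q = Some u \<Longrightarrow> oc v (replace_at t q s) + oc v u = oc v t + oc v s"
proof (induction t arbitrary: q)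
  case (Var x)
  then show ?case by (cases q) auto
next
  case (Fun f ts)
  show ?case
  proof (cases q)
    case Nil then show ?thesis using Fun by auto
  next
    case (Cons i q')
    with Fun.prems have i: "i < length ts" and t: "term_at (ts ! i) q' = Some u" by (auto split: if_splits)
    have ih: "oc v (replace_at (ts ! i) q' s) + oc v u = oc v (ts ! i) + oc v s"
      using Fun.IH[OF nth_mem[OF i] t] .
    have "sum_list ((map (oc v) ts)[i := oc v (replace_at (ts ! i) q' s)]) + map (oc v) ts ! i
       = sum_list (map (oc v) ts) + oc v (replace_at (ts ! i) q' s)"
      using i by (intro sum_list_upd) simp
    then show ?thesis using Cons i ih by (simp add: map_update)
  qed
qed

lemma oc_sub: "term_at t q = Some u \<Longrightarrow> oc v u \<le> oc v t"
  using oc_replace[of t q u v "Fun undefined []"] by simp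

lemma fn_sub: "term_at t q = Some u \<Longrightarrow> fn u \<le> fn t"
  using fn_replace[of t q u "Var undefined"] by simp

lemma sum_list_two: "i < length xs \<Longrightarrow> j < length xs \<Longrightarrow> i \<noteq> j \<Longrightarrow> xs ! i + xs ! j \<le> sum_list (xs::nat list)"
proof -
  assume a: "i < length xs" "j < length xs" "i \<noteq> j"
  have "xs ! i + xs ! j = (\<Sum>k\<in>{i,j}. xs ! k)" using a by simp
  also have "\<dots> \<le> (\<Sum>k\<in>{..<length xs}. xs ! k)" using a by (intro sum_mono2) auto
  also have "\<dots> = sum_list xs" by (simp add: sum_list_sum_nth atLeast0LessThan)
  finally show ?thesis .
qed

lemma oc_two: "term_at t p = Some (Var x) \<Longrightarrow> term_at t q = Some (Var x) \<Longrightarrow> p \<noteq> q \<Longrightarrow> 2 \<le> oc x t"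
proof (induction t arbitrary: p q)
  case (Var y)
  then show ?case by (cases p; cases q) auto
next
  case (Fun f ts)
  obtain i p' where p: "p = i # p'" using Fun.prems by (cases p) auto
  obtain j q' where q: "q = j # q'" using Fun.prems by (cases q) auto
  have i: "i < length ts" and tp: "term_at (ts ! i) p' = Some (Var x)"
    using Fun.prems p by (auto split: if_splits)
  have j: "j < length ts" and tq: "term_at (ts ! j) q' = Some (Var x)"
    using Fun.prems q by (auto split: if_splits)
  show ?case
  proof (cases "i = j")
    case True
    then have "p' \<noteq> q'" using p q Fun.prems by auto
    then have "2 \<le> oc x (ts ! i)" using Fun.IH[OF nth_mem[OF i] tp] tq True by auto
    moreover have "oc x (ts ! i) \<le> sum_list (map (oc x) ts)"
      using i by (metis elem_le_sum_list length_map nth_map)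
    ultimately show ?thesis by simp
  next
    case False
    have "1 \<le> oc x (ts ! i)" using oc_sub[OF tp, of x] by simp
    moreover have "1 \<le> oc x (ts ! j)" using oc_sub[OF tq, of x] by simp
    moreover have "map (oc x) ts ! i + map (oc x) ts ! j \<le> sum_list (map (oc x) ts)"
      using i j False by (intro sum_list_two) auto
    ultimately show ?thesis using i j by simp
  qed
qed



lemma tsubst_cong: "(\<forall>v\<in>vars_t t. \<sigma> v = \<tau> v) \<Longrightarrow> tsubst \<sigma> t = tsubst \<tau> t"
  by (induction t) auto

lemma asubst_cong: "(\<forall>v\<in>vars_a A. \<sigma> v = \<tau> v) \<Longrightarrow> asubst \<sigma> A = asubst \<tau> A"
  by (cases A) (auto intro: tsubst_cong)

lemma tsubst_comp: "tsubst \<sigma> (tsubst \<tau> t) = tsubst (\<lambda>v. tsubst \<sigma> (\<tau> v)) t"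
  by (induction t) auto

lemma asubst_comp: "asubst \<sigma> (asubst \<tau> A) = asubst (\<lambda>v. tsubst \<sigma> (\<tau> v)) A"
  by (cases A) (auto simp: tsubst_comp)

lemma vars_tsubst: "vars_t (tsubst \<sigma> t) = (\<Union>v\<in>vars_t t. vars_t (\<sigma> v))"
  by (induction t) auto

lemma vars_asubst: "vars_a (asubst \<sigma> A) = (\<Union>v\<in>vars_a A. vars_t (\<sigma> v))"
  by (cases A) (auto simp: vars_tsubst)

lemma vars_ms_image: "vars_ms (image_mset (asubst \<sigma>) M) = (\<Union>v\<in>vars_ms M. vars_t (\<sigma> v))"
  by (auto simp: vars_ms_def vars_asubst)

lemma vars_cl_csubst: "vars_cl (csubst \<sigma> C) = (\<Union>v\<in>vars_cl C. vars_t (\<sigma> v))"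
  by (cases C) (auto simp: vars_ms_image)

lemma csubst_comp: "csubst \<sigma> (csubst \<tau> C) = csubst (\<lambda>v. tsubst \<sigma> (\<tau> v)) C"
  by (cases C) (simp add: asubst_comp multiset.map_comp o_def)

lemma csubst_cong: "(\<forall>v\<in>vars_cl C. \<sigma> v = \<tau> v) \<Longrightarrow> csubst \<sigma> C = csubst \<tau> C"
  by (cases C) (auto simp: vars_ms_def intro!: image_mset_cong asubst_cong)

lemma vars_lhs_subst: "vars_lhs (constr_subst \<sigma> \<pi>) = (\<Union>v\<in>vars_lhs \<pi>. vars_t (\<sigma> v))"
  unfolding vars_lhs_def constr_subst_def by (force simp: vars_tsubst split: prod.splits)

lemma vars_lhs_constr: "vars_lhs \<pi> \<subseteq> vars_constr \<pi>"
  by (auto simp: vars_lhs_def vars_constr_def)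

lemma vars_lhs_append: "vars_lhs (\<pi> @ \<rho>) = vars_lhs \<pi> \<union> vars_lhs \<rho>"
  by (auto simp: vars_lhs_def)

lemma is_solution_append: "is_solution \<delta> (\<pi> @ \<rho>) \<longleftrightarrow> is_solution \<delta> \<pi> \<and> is_solution \<delta> \<rho>"
  by (auto simp: is_solution_def)

lemma is_solution_subst:
  assumes "is_solution \<delta> \<pi>" "\<forall>v\<in>vars_lhs \<pi>. tsubst \<delta>' (\<sigma> v) = \<delta> v"
  shows "is_solution \<delta>' (constr_subst \<sigma> \<pi>)"
proof -
  have "tsubst \<delta>' (tsubst \<sigma> t) = tsubst \<delta> t" if "(t, s) \<in> set \<pi>" for t s
    unfolding tsubst_comp using assms(2) that by (intro tsubst_cong) (auto simp: vars_lhs_def)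
  then show ?thesis using assms(1) by (fastforce simp: is_solution_def constr_subst_def)
qed

lemma is_solution_cong:
  assumes "is_solution \<delta> \<pi>" "\<forall>v\<in>vars_lhs \<pi>. \<delta>' v = \<delta> v"
  shows "is_solution \<delta>' \<pi>"
proof -
  have "tsubst \<delta>' t = tsubst \<delta> t" if "(t, s) \<in> set \<pi>" for t s
    using assms(2) that by (intro tsubst_cong) (auto simp: vars_lhs_def)
  then show ?thesis using assms(1) by (fastforce simp: is_solution_def)
qed

lemma ground_tsubst: "ground_t (tsubst \<delta> t) \<longleftrightarrow> (\<forall>v\<in>vars_t t. ground_t (\<delta> v))"
  by (auto simp: ground_t_def vars_tsubst)

lemma grounding_transfer:
  assumes "\<forall>v\<in>V. tsubst \<delta>' (\<sigma> v) = \<delta> v" "grounding_on \<delta> V"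
  shows "grounding_on \<delta>' (\<Union>v\<in>V. vars_t (\<sigma> v))"
  using assms unfolding grounding_on_def by (metis UN_E ground_tsubst)

lemma Ref_sound:
  assumes s1: "sat_cc I (C, \<pi> @ [(Var x, t)])"
    and s2: "sat_cc I (csubst (Var(x := t)) C, constr_subst (Var(x := t)) \<pi>)"
    and x: "x \<in> vars_cl C" and disj: "vars_t t \<inter> vars_cc (C, \<pi>) = {}"
  shows "sat_cc I (C, \<pi>)"
  unfolding sat_cc.simps
proof (intro allI impI, elim conjE)
  fix \<delta> assume g: "grounding_on \<delta> (vars_cl C \<union> vars_lhs \<pi>)" and sol: "is_solution \<delta> \<pi>"
  show "sat_ground I (csubst \<delta> C)"
  proof (cases "\<exists>\<tau>. tsubst \<tau> t = \<delta> x")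
    case False
    have "grounding_on \<delta> (vars_cl C \<union> vars_lhs (\<pi> @ [(Var x, t)]))"
      using g x by (auto simp: vars_lhs_append grounding_on_def vars_lhs_def)
    moreover have "is_solution \<delta> (\<pi> @ [(Var x, t)])"
      using sol False by (auto simp: is_solution_append is_solution_def)
    ultimately show ?thesis using s1 by simp
  next
    case True
    then obtain \<tau> where \<tau>: "tsubst \<tau> t = \<delta> x" by blast
    define \<delta>' where "\<delta>' = (\<lambda>v. if v \<in> vars_t t then \<tau> v else \<delta> v)"
    define \<sigma> where "\<sigma> = Var(x := t)"
    have key: "\<forall>v\<in>vars_cl C \<union> vars_lhs \<pi>. tsubst \<delta>' (\<sigma> v) = \<delta> v"
    proof
      fix v assume v: "v \<in> vars_cl C \<union> vars_lhs \<pi>"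
      show "tsubst \<delta>' (\<sigma> v) = \<delta> v"
      proof (cases "v = x")
        case True
        have "tsubst \<delta>' t = tsubst \<tau> t" by (intro tsubst_cong) (auto simp: \<delta>'_def)
        then show ?thesis using True \<tau> by (simp add: \<sigma>_def)
      next
        case False
        have "v \<notin> vars_t t" using v disj vars_lhs_constr[of \<pi>] by auto
        then show ?thesis using False by (simp add: \<sigma>_def \<delta>'_def)
      qed
    qed
    have g': "grounding_on \<delta>' (vars_cl (csubst \<sigma> C) \<union> vars_lhs (constr_subst \<sigma> \<pi>))"
      using grounding_transfer[OF key g] by (simp add: vars_cl_csubst vars_lhs_subst UN_Un)
    have sol': "is_solution \<delta>' (constr_subst \<sigma> \<pi>)"
      using is_solution_subst[OF sol] key by auto
    have "sat_ground I (csubst \<delta>' (csubst \<sigma> C))" using s2 g' sol' by (simp add: \<sigma>_def)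
    moreover have "csubst \<delta>' (csubst \<sigma> C) = csubst \<delta> C"
      unfolding csubst_comp using key by (intro csubst_cong) auto
    ultimately show ?thesis by simp
  qed
qed



lemma vars_term_at: "term_at t q = Some u \<Longrightarrow> vars_t u \<subseteq> vars_t t"
  apply (induction t q rule: term_at.induct)
    apply (auto split: if_splits)
  by (meson nth_mem subsetD)

lemma vars_atom_at: "atom_at E q = Some u \<Longrightarrow> vars_t u \<subseteq> vars_a E"
  apply (induction E q rule: atom_at.induct)
   apply (auto split: if_splits dest!: vars_term_at)
  by (meson nth_mem subsetD)

lemma vars_upd: "vars_t r \<subseteq> vars_t (ts ! i) \<union> V \<Longrightarrow>
   \<Union> (set (map vars_t (ts[i := r]))) \<subseteq> \<Union> (set (map vars_t ts)) \<union> V"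
proof (cases "i < length ts")
  case True
  assume a: "vars_t r \<subseteq> vars_t (ts ! i) \<union> V"
  have "set (ts[i := r]) \<subseteq> insert r (set ts)" by (rule set_update_subset_insert)
  moreover have "ts ! i \<in> set ts" using True by simp
  ultimately show ?thesis using a by fastforce
qed (simp add: list_update_beyond)

lemma vars_ms_add: "vars_ms (add_mset A M) = vars_a A \<union> vars_ms M"
  by (simp add: vars_ms_def)

lemma grounding_upd: "grounding_on \<delta> V \<Longrightarrow> ground_t t \<Longrightarrow> W \<subseteq> V \<union> {x} \<Longrightarrow> grounding_on (\<delta>(x := t)) W"
  by (auto simp: grounding_on_def)

lemma grounding_mono: "grounding_on \<delta> V \<Longrightarrow> W \<subseteq> V \<Longrightarrow> grounding_on \<delta> W"
  by (auto simp: grounding_on_def)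

lemma vars_replace: "vars_t (replace_at t q s) \<subseteq> vars_t t \<union> vars_t s"
proof (induction t q s rule: replace_at.induct)
  case (3 f ts i p s)
  show ?case
  proof (cases "i < length ts")
    case True
    have h: "vars_t (replace_at (ts!i) p s) \<subseteq> vars_t (ts!i) \<union> vars_t s" using 3 by simp
    show ?thesis using vars_upd[OF h] True by simp
  qed (simp add: list_update_beyond)
qed auto

lemma vars_atom_replace: "vars_a (atom_replace E q s) \<subseteq> vars_a E \<union> vars_t s"
proof (cases E)
  case (Atom P ts)
  show ?thesis
  proof (cases q)
    case (Cons i p)
    have "vars_t (replace_at (ts ! i) p s) \<subseteq> vars_t (ts!i) \<union> vars_t s" by (rule vars_replace)
    then show ?thesis using Atom Cons vars_upd by simp
  qed (simp add: Atom)
qed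

lemma replace_subst: "term_at t q = Some u \<Longrightarrow> tsubst \<delta> s = tsubst \<delta> u \<Longrightarrow>
    tsubst \<delta> (replace_at t q s) = tsubst \<delta> t"
proof (induction t q s rule: replace_at.induct)
  case (3 f ts i p s)
  then have i: "i < length ts" and t: "term_at (ts ! i) p = Some u" by (auto split: if_splits)
  have "tsubst \<delta> (replace_at (ts ! i) p s) = tsubst \<delta> (ts ! i)" using 3 i t by auto
  then show ?case using i by (simp add: map_update) (metis length_map list_update_id nth_map)
qed auto

lemma atom_replace_subst: "atom_at E q = Some u \<Longrightarrow> tsubst \<delta> s = tsubst \<delta> u \<Longrightarrow>
    asubst \<delta> (atom_replace E q s) = asubst \<delta> E"
proof (induction E q rule: atom_at.induct)
  case (2 P ts i p)
  then have i: "i < length ts" and t: "term_at (ts ! i) p = Some u" by (auto split: if_splits)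
  have "tsubst \<delta> (replace_at (ts ! i) p s) = tsubst \<delta> (ts ! i)" using replace_subst[OF t 2(2)] .
  then show ?case using i by (simp add: map_update) (metis length_map list_update_id nth_map)
qed auto

lemma vars_proj: "vars_a (proj_a T fP P A) = vars_a A"
  by (cases A) auto

lemma proj_subst: "asubst \<delta> (proj_a T fP P A) = proj_a T fP P (asubst \<delta> A)"
  by (cases A) auto

lemma ground_asubst: "grounding_on \<delta> V \<Longrightarrow> vars_a A \<subseteq> V \<Longrightarrow> ground_a (asubst \<delta> A)"
  by (auto simp: ground_a_def vars_asubst grounding_on_def ground_t_def)

lemma MO_sound_cc:
  assumes "sat_cc I' (proj_cc T fP P D)"
  shows "sat_cc {A. ground_a A \<and> proj_a T fP P A \<in> I'} D"
proof -
  obtain \<Gamma> \<Delta> \<pi> where D: "D = ((\<Gamma>, \<Delta>), \<pi>)" by (metis prod.collapse)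
  have vm: "vars_ms (image_mset (proj_a T fP P) M) = vars_ms M" for M
    by (auto simp: vars_ms_def vars_proj)
  show ?thesis unfolding D sat_cc.simps
  proof (intro allI impI, elim conjE)
    fix \<delta> assume g: "grounding_on \<delta> (vars_cl (\<Gamma>, \<Delta>) \<union> vars_lhs \<pi>)" and sol: "is_solution \<delta> \<pi>"
    have "sat_ground I' (csubst \<delta> (image_mset (proj_a T fP P) \<Gamma>, image_mset (proj_a T fP P) \<Delta>))"
      using assms g sol by (simp add: D vm)
    moreover have gr: "ground_a (asubst \<delta> A)" if "A \<in># \<Gamma> + \<Delta>" for A
      using that g by (intro ground_asubst) (auto simp: vars_ms_def)
    ultimately show "sat_ground {A. ground_a A \<and> proj_a T fP P A \<in> I'} (csubst \<delta> (\<Gamma>, \<Delta>))"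
      by (auto simp: proj_subst)
  qed
qed

lemma SH_sound:
  assumes s1: "sat_cc I ((add_mset (Atom S [Var x]) \<Gamma>l, add_mset (atom_replace E p (Var x)) \<Delta>l), \<pi>)"
    and s2: "sat_cc I ((\<Gamma>r, add_mset (Atom S [s]) \<Delta>r), \<pi>)"
    and at: "atom_at E p = Some s"
    and x: "x \<notin> vars_cc ((\<Gamma>, add_mset E \<Delta>), \<pi>)"
    and G: "image_mset (asubst (Var(x := s))) \<Gamma>l \<union># \<Gamma>r = \<Gamma>"
    and D: "\<Delta>l \<union># \<Delta>r = \<Delta>"
  shows "sat_cc I ((\<Gamma>, add_mset E \<Delta>), \<pi>)"
  unfolding sat_cc.simps
proof (intro allI impI, elim conjE)
  fix \<delta> assume g: "grounding_on \<delta> (vars_cl (\<Gamma>, add_mset E \<Delta>) \<union> vars_lhs \<pi>)" and sol: "is_solution \<delta> \<pi>"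
  have vs: "vars_t s \<subseteq> vars_a E" using vars_atom_at[OF at] .
  have Gr: "set_mset \<Gamma>r \<subseteq> set_mset \<Gamma>" and Gl: "asubst (Var(x := s)) ` set_mset \<Gamma>l \<subseteq> set_mset \<Gamma>"
    using G by auto
  have Dr: "set_mset \<Delta>r \<subseteq> set_mset \<Delta>" and Dl: "set_mset \<Delta>l \<subseteq> set_mset \<Delta>" using D by auto
  show "sat_ground I (csubst \<delta> (\<Gamma>, add_mset E \<Delta>))"
  proof (rule ccontr)
    assume na: "\<not> sat_ground I (csubst \<delta> (\<Gamma>, add_mset E \<Delta>))"
    then have GI: "asubst \<delta> ` set_mset \<Gamma> \<subseteq> I" and EI: "asubst \<delta> E \<notin> I"
      and DI: "\<forall>A\<in>#\<Delta>. asubst \<delta> A \<notin> I" by auto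
    have "vars_cl (\<Gamma>r, add_mset (Atom S [s]) \<Delta>r) \<union> vars_lhs \<pi> \<subseteq> vars_cl (\<Gamma>, add_mset E \<Delta>) \<union> vars_lhs \<pi>"
      using vs Gr Dr by (auto simp: vars_ms_def)
    then have "grounding_on \<delta> (vars_cl (\<Gamma>r, add_mset (Atom S [s]) \<Delta>r) \<union> vars_lhs \<pi>)"
      using g grounding_mono by blast
    then have "sat_ground I (csubst \<delta> (\<Gamma>r, add_mset (Atom S [s]) \<Delta>r))" using s2 sol by simp
    then have Ss: "Atom S [tsubst \<delta> s] \<in> I" using GI Gr DI Dr by auto
    define \<delta>' where "\<delta>' = \<delta>(x := tsubst \<delta> s)"
    have comp: "(\<lambda>v. tsubst \<delta> ((Var(x := s)) v)) = \<delta>'" by (auto simp: \<delta>'_def)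
    have xE: "x \<notin> vars_a E" and xD: "x \<notin> vars_ms \<Delta>" and xG: "x \<notin> vars_ms \<Gamma>"
      and xpi: "x \<notin> vars_lhs \<pi>" using x vars_lhs_constr[of \<pi>] by (auto simp: vars_ms_def)
    have sg: "ground_t (tsubst \<delta> s)" using g vs unfolding ground_tsubst grounding_on_def by (auto simp: vars_ms_def)
    have vGl: "vars_a A \<subseteq> vars_ms \<Gamma> \<union> {x}" if "A \<in># \<Gamma>l" for A
    proof -
      have "asubst (Var(x := s)) A \<in># \<Gamma>" using Gl that by auto
      then have sub: "vars_a (asubst (Var(x := s)) A) \<subseteq> vars_ms \<Gamma>" by (auto simp: vars_ms_def)
      show ?thesis
      proof
        fix v assume v: "v \<in> vars_a A"
        show "v \<in> vars_ms \<Gamma> \<union> {x}"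
        proof (cases "v = x")
          case False
          then have "v \<in> vars_t ((Var(x := s)) v)" by simp
          then show ?thesis using sub v unfolding vars_asubst by blast
        qed simp
      qed
    qed
    have "grounding_on \<delta>' (vars_cl (add_mset (Atom S [Var x]) \<Gamma>l, add_mset (atom_replace E p (Var x)) \<Delta>l) \<union> vars_lhs \<pi>)"
    proof -
      have a1: "vars_ms (add_mset (Atom S [Var x]) \<Gamma>l) \<subseteq> vars_ms \<Gamma> \<union> {x}"
        using vGl unfolding vars_ms_def by auto
      have a2: "vars_ms \<Delta>l \<subseteq> vars_ms \<Delta>" using Dl unfolding vars_ms_def by auto
      have a3: "vars_ms (add_mset (atom_replace E p (Var x)) \<Delta>l) \<subseteq> vars_a E \<union> vars_ms \<Delta> \<union> {x}"
        using vars_atom_replace[of E p "Var x"] a2 unfolding vars_ms_def by auto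
      have "vars_cl (add_mset (Atom S [Var x]) \<Gamma>l, add_mset (atom_replace E p (Var x)) \<Delta>l) \<union> vars_lhs \<pi>
          \<subseteq> vars_cl (\<Gamma>, add_mset E \<Delta>) \<union> vars_lhs \<pi> \<union> {x}"
        using a1 a3 unfolding vars_cl.simps vars_ms_add by blast
      then show ?thesis using g sg unfolding \<delta>'_def by (rule grounding_upd[rotated 2])
    qed
    moreover have "is_solution \<delta>' \<pi>" using xpi by (intro is_solution_cong[OF sol]) (auto simp: \<delta>'_def)
    ultimately have sg1: "sat_ground I (csubst \<delta>' (add_mset (Atom S [Var x]) \<Gamma>l, add_mset (atom_replace E p (Var x)) \<Delta>l))"
      using s1 by simp
    have c1: "asubst \<delta>' ` set_mset \<Gamma>l \<subseteq> I"
    proof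
      fix B assume "B \<in> asubst \<delta>' ` set_mset \<Gamma>l"
      then obtain A where A: "A \<in># \<Gamma>l" "B = asubst \<delta>' A" by auto
      have "B = asubst \<delta> (asubst (Var(x := s)) A)" using A unfolding asubst_comp comp by simp
      then show "B \<in> I" using GI Gl A by auto
    qed
    have c2: "asubst \<delta>' (Atom S [Var x]) \<in> I" using Ss by (simp add: \<delta>'_def)
    have c3: "asubst \<delta>' (atom_replace E p (Var x)) = asubst \<delta> E"
    proof -
      have "tsubst \<delta>' s = tsubst \<delta> s" using xE vs by (intro tsubst_cong) (auto simp: \<delta>'_def)
      then have "asubst \<delta>' (atom_replace E p (Var x)) = asubst \<delta>' E"
        by (intro atom_replace_subst[OF at]) (simp add: \<delta>'_def)
      also have "\<dots> = asubst \<delta> E" using xE by (intro asubst_cong) (auto simp: \<delta>'_def)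
      finally show ?thesis .
    qed
    have c4: "asubst \<delta>' A \<notin> I" if "A \<in># \<Delta>l" for A
    proof -
      have "x \<notin> vars_a A" using xD Dl that by (auto simp: vars_ms_def)
      then have "asubst \<delta>' A = asubst \<delta> A" by (intro asubst_cong) (auto simp: \<delta>'_def)
      then show ?thesis using DI Dl that by auto
    qed
    have "set_mset (image_mset (asubst \<delta>') (add_mset (Atom S [Var x]) \<Gamma>l)) \<subseteq> I"
      using c1 c2 by simp
    then have "\<exists>A\<in>#image_mset (asubst \<delta>') (add_mset (atom_replace E p (Var x)) \<Delta>l). A \<in> I"
      using sg1 unfolding csubst.simps sat_ground.simps by blast
    then obtain A where A: "A \<in># add_mset (atom_replace E p (Var x)) \<Delta>l" "asubst \<delta>' A \<in> I"
      by (metis (no_types, lifting) in_image_mset imageE)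
    then show False using c3 c4 EI by (cases "A = atom_replace E p (Var x)") auto
  qed
qed

lemma LI_sound:
  fixes E :: "('p, 'f, 'v) atom"
  assumes s1: "sat_cc I ((image_mset (asubst (Var(x := Var x'))) \<Gamma> + \<Gamma>, add_mset (atom_replace E q (Var x')) \<Delta>),
                 \<pi> @ constr_subst (Var(x := Var x')) \<pi>)"
    and at: "atom_at E q = Some (Var x)"
    and x': "x' \<notin> vars_cc ((\<Gamma>, add_mset E \<Delta>), \<pi>)"
  shows "sat_cc I ((\<Gamma>, add_mset E \<Delta>), \<pi>)"
  unfolding sat_cc.simps
proof (intro allI impI, elim conjE)
  fix \<delta> assume g: "grounding_on \<delta> (vars_cl (\<Gamma>, add_mset E \<Delta>) \<union> vars_lhs \<pi>)" and sol: "is_solution \<delta> \<pi>"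
  define \<sigma> :: "'v \<Rightarrow> ('f, 'v) trm" where "\<sigma> = Var(x := Var x')"
  define \<delta>' where "\<delta>' = \<delta>(x' := \<delta> x)"
  have xE: "x \<in> vars_a E" using vars_atom_at[OF at] by simp
  have x'E: "x' \<notin> vars_a E" and x'D: "x' \<notin> vars_ms \<Delta>" and x'G: "x' \<notin> vars_ms \<Gamma>"
    and x'pi: "x' \<notin> vars_lhs \<pi>" using x' vars_lhs_constr[of \<pi>] by (auto simp: vars_ms_def)
  have xx: "x \<noteq> x'" using xE x'E by auto
  have key: "tsubst \<delta>' (\<sigma> v) = \<delta> v" if "v \<noteq> x'" for v
    using that by (auto simp: \<sigma>_def \<delta>'_def)
  have same: "asubst \<delta>' A = asubst \<delta> A" if "x' \<notin> vars_a A" for A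
    using that by (intro asubst_cong) (auto simp: \<delta>'_def)
  have sameG: "asubst \<delta>' (asubst \<sigma> A) = asubst \<delta> A" if "A \<in># \<Gamma>" for A
  proof -
    have "x' \<notin> vars_a A" using x'G that by (auto simp: vars_ms_def)
    then show ?thesis unfolding asubst_comp by (intro asubst_cong ballI key) auto
  qed
  have gx: "ground_t (\<delta> x)" using g xE by (auto simp: grounding_on_def vars_ms_def)
  have vG: "vars_ms (image_mset (asubst \<sigma>) \<Gamma>) \<subseteq> vars_ms \<Gamma> \<union> {x'}"
    by (auto simp: vars_ms_image \<sigma>_def split: if_splits)
  have "vars_cl (image_mset (asubst \<sigma>) \<Gamma> + \<Gamma>, add_mset (atom_replace E q (Var x')) \<Delta>)
        \<union> vars_lhs (\<pi> @ constr_subst \<sigma> \<pi>) \<subseteq> vars_cl (\<Gamma>, add_mset E \<Delta>) \<union> vars_lhs \<pi> \<union> {x'}"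
    using vG vars_atom_replace[of E q "Var x'"]
    by (auto simp: vars_ms_def vars_lhs_append vars_lhs_subst \<sigma>_def split: if_splits)
  then have g': "grounding_on \<delta>' (vars_cl (image_mset (asubst \<sigma>) \<Gamma> + \<Gamma>, add_mset (atom_replace E q (Var x')) \<Delta>)
        \<union> vars_lhs (\<pi> @ constr_subst \<sigma> \<pi>))"
    using g gx unfolding \<delta>'_def by (rule grounding_upd[rotated 2])
  have sol': "is_solution \<delta>' (\<pi> @ constr_subst \<sigma> \<pi>)"
    unfolding is_solution_append
  proof
    show "is_solution \<delta>' \<pi>" using x'pi by (intro is_solution_cong[OF sol]) (auto simp: \<delta>'_def)
    show "is_solution \<delta>' (constr_subst \<sigma> \<pi>)" using x'pi by (intro is_solution_subst[OF sol] ballI key) auto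
  qed
  have sg: "sat_ground I (csubst \<delta>' (image_mset (asubst \<sigma>) \<Gamma> + \<Gamma>, add_mset (atom_replace E q (Var x')) \<Delta>))"
    using s1 g' sol' by (simp add: \<sigma>_def)
  have eE: "asubst \<delta>' (atom_replace E q (Var x')) = asubst \<delta> E"
  proof -
    have "asubst \<delta>' (atom_replace E q (Var x')) = asubst \<delta>' E"
      by (intro atom_replace_subst[OF at]) (simp add: \<delta>'_def xx)
    also have "\<dots> = asubst \<delta> E" by (rule same[OF x'E])
    finally show ?thesis .
  qed
  have sD: "asubst \<delta>' A = asubst \<delta> A" if "A \<in># \<Delta>" for A
    using same x'D that by (auto simp: vars_ms_def)
  have sG: "asubst \<delta>' A = asubst \<delta> A" if "A \<in># \<Gamma>" for A
    using same x'G that by (auto simp: vars_ms_def)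
  show "sat_ground I (csubst \<delta> (\<Gamma>, add_mset E \<Delta>))"
  proof (rule ccontr)
    assume na: "\<not> sat_ground I (csubst \<delta> (\<Gamma>, add_mset E \<Delta>))"
    then have GI: "asubst \<delta> ` set_mset \<Gamma> \<subseteq> I" and EI: "asubst \<delta> E \<notin> I"
      and DI: "\<forall>A\<in>#\<Delta>. asubst \<delta> A \<notin> I" by auto
    have "asubst \<delta>' ` set_mset \<Gamma> \<subseteq> I" using GI sG by auto
    moreover have "asubst \<delta>' ` asubst \<sigma> ` set_mset \<Gamma> \<subseteq> I" using GI sameG by auto
    ultimately have "set_mset (image_mset (asubst \<delta>') (image_mset (asubst \<sigma>) \<Gamma> + \<Gamma>)) \<subseteq> I"
      by simp
    then have "\<exists>A\<in>#image_mset (asubst \<delta>') (add_mset (atom_replace E q (Var x')) \<Delta>). A \<in> I"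
      using sg unfolding csubst.simps sat_ground.simps by blast
    then obtain A where A: "A \<in># add_mset (atom_replace E q (Var x')) \<Delta>" "asubst \<delta>' A \<in> I"
      by (metis (no_types, lifting) in_image_mset imageE)
    then show False using eE sD DI EI by (cases "A = atom_replace E q (Var x')") auto
  qed
qed



fun am :: "('p, 'f, 'v) atom \<Rightarrow> nat" where
  "am (Atom P ts) = sum_list (map (\<lambda>t. fn t - 1) ts)"

fun aoc :: "'v \<Rightarrow> ('p, 'f, 'v) atom \<Rightarrow> nat" where
  "aoc v (Atom P ts) = sum_list (map (oc v) ts)"

definition ocm :: "'v \<Rightarrow> ('p, 'f, 'v) atom multiset \<Rightarrow> nat" where
  "ocm v M = sum_mset (image_mset (aoc v) M)"

definition nl :: "('p, 'f, 'v) atom multiset \<Rightarrow> nat" where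
  "nl M = (\<Sum>v\<in>vars_ms M. ocm v M * (ocm v M - 1))"

lemma aoc_replace: "atom_at E q = Some u \<Longrightarrow> aoc v (atom_replace E q s) + oc v u = aoc v E + oc v s"
proof (induction E q rule: atom_at.induct)
  case (2 P ts i p)
  then have i: "i < length ts" and t: "term_at (ts ! i) p = Some u" by (auto split: if_splits)
  have "sum_list ((map (oc v) ts)[i := oc v (replace_at (ts ! i) p s)]) + map (oc v) ts ! i
       = sum_list (map (oc v) ts) + oc v (replace_at (ts ! i) p s)"
    using i by (intro sum_list_upd) simp
  then show ?case using i oc_replace[OF t, of v s] by (simp add: map_update)
qed auto

lemma aoc_sub: "atom_at E q = Some u \<Longrightarrow> oc v u \<le> aoc v E"
  using aoc_replace[of E q u v "Fun undefined []"] by simp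

lemma aoc_two: "atom_at E p = Some (Var x) \<Longrightarrow> atom_at E q = Some (Var x) \<Longrightarrow> p \<noteq> q \<Longrightarrow> 2 \<le> aoc x E"
proof -
  assume a: "atom_at E p = Some (Var x)" "atom_at E q = Some (Var x)" "p \<noteq> q"
  obtain P ts where E: "E = Atom P ts" by (cases E)
  have "term_at (Fun undefined ts) p = Some (Var x)" "term_at (Fun undefined ts) q = Some (Var x)"
    using a E by (cases p; simp; cases q; simp)+
  from oc_two[OF this a(3)] show ?thesis using E by simp
qed

lemma am_replace_var: "atom_at E q = Some (Var y) \<Longrightarrow> am (atom_replace E q (Var z)) = am E"
proof (induction E q rule: atom_at.induct)
  case (2 P ts i p)
  then have i: "i < length ts" and t: "term_at (ts ! i) p = Some (Var y)" by (auto split: if_splits)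
  have "fn (replace_at (ts ! i) p (Var z)) = fn (ts ! i)" using fn_replace[OF t, of "Var z"] by simp
  then show ?case using i by (simp add: map_update) (metis (no_types, lifting) list_update_id nth_map)
qed auto

lemma am_SH:
  assumes at: "atom_at E p = Some s" and len: "length p = 2" and s: "s = Fun g us"
  shows "am (atom_replace E p (Var x)) < am E" "am (Atom S [s]) < am E"
proof -
  obtain P ts where E: "E = Atom P ts" by (cases E)
  obtain i j where p: "p = [i, j]" using len by (metis One_nat_def Suc_1 length_0_conv length_Suc_conv)
  have i: "i < length ts" and t: "term_at (ts ! i) [j] = Some s" using at E p by (auto split: if_splits)
  have fr: "fn (replace_at (ts ! i) [j] (Var x)) + fn s = fn (ts ! i)" using fn_replace[OF t, of "Var x"] by simp
  obtain h vs where ti: "ts ! i = Fun h vs" using t by (cases "ts ! i") auto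
  have fr2: "fn (replace_at (ts ! i) [j] (Var x)) \<ge> 1" using ti by simp
  have fs: "fn s \<ge> 1" using s by simp
  have upd: "sum_list ((map (\<lambda>t. fn t - 1) ts)[i := fn (replace_at (ts ! i) [j] (Var x)) - 1]) + map (\<lambda>t. fn t - 1) ts ! i
       = sum_list (map (\<lambda>t. fn t - 1) ts) + (fn (replace_at (ts ! i) [j] (Var x)) - 1)"
    using i by (intro sum_list_upd) simp
  have le: "fn (ts ! i) - 1 \<le> am E"
    using i E by (simp add: elem_le_sum_list) (metis elem_le_sum_list length_map nth_map)
  show "am (atom_replace E p (Var x)) < am E"
    using upd fr fr2 fs i by (simp add: E p map_update)
  show "am (Atom S [s]) < am E" using le fr fs fr2 by simp
qed

lemma ocm_zero: "v \<notin> vars_ms M \<Longrightarrow> ocm v M = 0"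
proof -
  have oc0: "v \<notin> vars_t t \<Longrightarrow> oc v t = 0" for t
    by (induction t) (auto simp: sum_list_eq_0_iff)
  have "v \<notin> vars_a A \<Longrightarrow> aoc v A = 0" for A
    by (cases A) (auto simp: sum_list_eq_0_iff oc0)
  then show "v \<notin> vars_ms M \<Longrightarrow> ocm v M = 0" by (auto simp: ocm_def vars_ms_def sum_mset_0_iff)
qed

lemma finite_vars_t: "finite (vars_t t)" by (induction t) auto
lemma finite_vars_a: "finite (vars_a A)" by (cases A) (auto simp: finite_vars_t)
lemma finite_vars_ms: "finite (vars_ms M)" by (auto simp: vars_ms_def finite_vars_a)

lemma nl_LI:
  assumes at: "atom_at E q = Some (Var x)"
    and x': "x' \<notin> vars_ms (add_mset E \<Delta>)"
    and two: "2 \<le> ocm x (add_mset E \<Delta>)"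
  shows "nl (add_mset (atom_replace E q (Var x')) \<Delta>) < nl (add_mset E \<Delta>)"
proof -
  define M where "M = add_mset E \<Delta>"
  define M' where "M' = add_mset (atom_replace E q (Var x')) \<Delta>"
  define g :: "nat \<Rightarrow> nat" where "g c = c * (c - 1)" for c
  define V where "V = vars_ms M \<union> {x'}"
  have fV: "finite V" by (simp add: V_def finite_vars_ms)
  have xE: "x \<in> vars_a E" using vars_atom_at[OF at] by simp
  have xx: "x \<noteq> x'" using x' xE by (auto simp: vars_ms_def)
  have oc: "ocm v M' + oc v (Var x) = ocm v M + oc v (Var x')" for v
    using aoc_replace[OF at, of v "Var x'"] by (simp add: ocm_def M_def M'_def)
  have vM': "vars_ms M' \<subseteq> V"
    using vars_atom_replace[of E q "Var x'"] by (auto simp: V_def M_def M'_def vars_ms_def)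
  have "nl M' = (\<Sum>v\<in>V. g (ocm v M'))"
    unfolding nl_def g_def using fV vM' by (intro sum.mono_neutral_left) (auto simp: ocm_zero)
  moreover have "nl M = (\<Sum>v\<in>V. g (ocm v M))"
    unfolding nl_def g_def using fV by (intro sum.mono_neutral_left) (auto simp: ocm_zero V_def)
  moreover have "(\<Sum>v\<in>V. g (ocm v M')) < (\<Sum>v\<in>V. g (ocm v M))"
  proof (rule sum_strict_mono_ex1[OF fV])
    show "\<forall>v\<in>V. g (ocm v M') \<le> g (ocm v M)"
    proof
      fix v assume "v \<in> V"
      show "g (ocm v M') \<le> g (ocm v M)"
      proof (cases "v = x'")
        case True
        then have "ocm v M' = 1" using oc[of v] ocm_zero[of x' M] x' xx by (simp add: M_def)
        then show ?thesis by (simp add: g_def)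
      next
        case False
        then have "ocm v M' \<le> ocm v M" using oc[of v] by simp
        then show ?thesis unfolding g_def by (simp add: mult_le_mono diff_le_mono)
      qed
    qed
    have "x \<in> V" using xE by (simp add: V_def M_def vars_ms_def)
    moreover have "g (ocm x M') < g (ocm x M)"
    proof -
      have "ocm x M' + 1 = ocm x M" using oc[of x] xx by simp
      moreover have "2 \<le> ocm x M" using two by (simp add: M_def)
      ultimately obtain k where k: "ocm x M' = Suc k" by (cases "ocm x M'") auto
      then have "ocm x M = Suc (Suc k)" using \<open>ocm x M' + 1 = ocm x M\<close> by simp
      then show ?thesis using k by (simp add: g_def)
    qed
    ultimately show "\<exists>a\<in>V. g (ocm a M') < g (ocm a M)" by blast
  qed
  ultimately show ?thesis by (simp add: M_def M'_def)
qed



definition mc :: "('p, 'f, 'v) cclause \<Rightarrow> nat multiset \<times> nat" where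
  "mc C = (image_mset am (snd (fst C)), nl (snd (fst C)))"

definition rcl :: "((nat multiset \<times> nat) \<times> (nat multiset \<times> nat)) set" where
  "rcl = mult less_than <*lex*> less_than"

definition mu :: "('p, 'f, 'v) cclause set \<Rightarrow> (nat multiset \<times> nat) multiset" where
  "mu N = image_mset mc (mset_set N)"

definition nonmon :: "('p, 'f, 'v) cclause set \<Rightarrow> ('p \<times> nat) set" where
  "nonmon N = {P \<in> preds N. snd P \<noteq> 1}"

definition Wr :: "(('p, 'f, 'v) cclause set \<times> ('p, 'f, 'v) cclause set) set" where
  "Wr = inv_image (less_than <*lex*> mult rcl) (\<lambda>N. (card (nonmon N), mu N))"

lemma wf_Wr: "wf Wr"
  unfolding Wr_def rcl_def
  by (intro wf_inv_image wf_lex_prod wf_less_than wf_mult)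

lemma mu_step:
  assumes fin: "finite N" and C: "C \<in> N" and fD: "finite Ds" and lt: "\<forall>D\<in>Ds. (mc D, mc C) \<in> rcl"
  shows "(mu ((N - {C}) \<union> Ds), mu N) \<in> mult rcl"
proof -
  define A where "A = N - {C}"
  have fA: "finite A" using fin by (simp add: A_def)
  have e: "(N - {C}) \<union> Ds = A \<union> (Ds - A)" by (auto simp: A_def)
  have u: "mset_set (A \<union> (Ds - A)) = mset_set A + mset_set (Ds - A)"
    by (rule mset_set_Union) (use fA fD in auto)
  have e1: "mu ((N - {C}) \<union> Ds) = image_mset mc (mset_set A) + image_mset mc (mset_set (Ds - A))"
    unfolding mu_def e u image_mset_union ..
  have "N = insert C A" "C \<notin> A" using C by (auto simp: A_def)
  then have e2: "mu N = image_mset mc (mset_set A) + {#mc C#}"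
    unfolding mu_def using fA by simp
  show ?thesis unfolding e1 e2
    by (rule one_step_implies_mult) (use lt fD in auto)
qed

lemma measure_step:
  assumes "finite (nonmon N)" "nonmon N' \<subseteq> nonmon N" "(mu N', mu N) \<in> mult rcl"
  shows "(N', N) \<in> Wr"
proof -
  have "card (nonmon N') \<le> card (nonmon N)" using assms by (intro card_mono)
  then show ?thesis using assms(3) unfolding Wr_def by (cases "card (nonmon N') < card (nonmon N)") auto
qed

lemma finite_preds: "finite N \<Longrightarrow> finite (preds N)"
proof -
  have "finite (preds_cc C)" for C :: "('a, 'b, 'c) cclause"
    by (cases C rule: preds_cc.cases) auto
  then show "finite N \<Longrightarrow> finite (preds N)" by (simp add: preds_def)
qed

lemma finite_nonmon: "finite N \<Longrightarrow> finite (nonmon N)"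
  unfolding nonmon_def by (rule finite_subset[of _ "preds N"]) (auto intro: finite_preds)

lemma pred_replace: "pred_a (atom_replace E p s) = pred_a E"
  by (cases "(E, p, s)" rule: atom_replace.cases) auto

lemma pred_asubst: "pred_a (asubst \<sigma> A) = pred_a A"
  by (cases A) auto

lemma preds_union: "preds (A \<union> B) = preds A \<union> preds B"
  by (simp add: preds_def)

lemma preds_mono: "A \<subseteq> B \<Longrightarrow> preds A \<subseteq> preds B"
  by (auto simp: preds_def)

lemma preds_insert: "preds (insert C A) = preds_cc C \<union> preds A"
  by (simp add: preds_def)

lemma nonmon_repl:
  assumes "C \<in> N" "\<forall>D\<in>Ds. {P \<in> preds_cc D. snd P \<noteq> 1} \<subseteq> nonmon N"
  shows "nonmon ((N - {C}) \<union> Ds) \<subseteq> nonmon N"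
  using assms by (auto simp: nonmon_def preds_def)

lemma preds_cc_in: "C \<in> N \<Longrightarrow> preds_cc C \<subseteq> preds N"
  by (auto simp: preds_def)

lemma SH_measure:
  assumes fin: "finite N" and st: "SH_step T N N'"
  shows "(N', N) \<in> Wr"
proof -
  from st obtain \<Gamma> \<Delta> E p s \<pi> x S \<Gamma>l \<Delta>l \<Gamma>r \<Delta>r where
    C: "((\<Gamma>, add_mset E \<Delta>), \<pi>) \<in> N" and at: "atom_at E p = Some s" and cx: "\<exists>f ts. s = Fun f ts"
    and len: "length p = 2" and G: "image_mset (asubst (Var(x := s))) \<Gamma>l \<union># \<Gamma>r = \<Gamma>"
    and D: "\<Delta>l \<union># \<Delta>r = \<Delta>"
    and N': "N' = (N - {((\<Gamma>, add_mset E \<Delta>), \<pi>)}) \<union>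
             {((add_mset (Atom S [Var x]) \<Gamma>l, add_mset (atom_replace E p (Var x)) \<Delta>l), \<pi>),
              ((\<Gamma>r, add_mset (Atom S [s]) \<Delta>r), \<pi>)}"
    unfolding SH_step_def by blast
  obtain f ts where s: "s = Fun f ts" using cx by blast
  note am = am_SH[OF at len s]
  have Dl: "\<Delta>l \<subseteq># \<Delta>" and Dr: "\<Delta>r \<subseteq># \<Delta>" using D by auto
  have Dls: "set_mset \<Delta>l \<subseteq> set_mset \<Delta>" and Drs: "set_mset \<Delta>r \<subseteq> set_mset \<Delta>" using D by auto
  have mlt: "(image_mset am (add_mset A' \<Delta>'), image_mset am (add_mset E \<Delta>)) \<in> mult less_than"
    if "\<Delta>' \<subseteq># \<Delta>" "am A' < am E" for A' \<Delta>'
  proof -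
    have dd: "\<Delta> = \<Delta>' + (\<Delta> - \<Delta>')" using that(1) by (metis subset_mset.add_diff_inverse)
    have "image_mset am (add_mset E \<Delta>) = image_mset am \<Delta>' + (image_mset am (\<Delta> - \<Delta>') + {#am E#})"
      using arg_cong[OF dd, of "image_mset am"] by simp
    moreover have "image_mset am (add_mset A' \<Delta>') = image_mset am \<Delta>' + {#am A'#}" by simp
    ultimately show ?thesis using that(2) by (simp only:) (rule one_step_implies_mult, auto)
  qed
  have r1: "(mc ((add_mset (Atom S [Var x]) \<Gamma>l, add_mset (atom_replace E p (Var x)) \<Delta>l), \<pi>),
             mc ((\<Gamma>, add_mset E \<Delta>), \<pi>)) \<in> rcl"
    using mlt[OF Dl am(1)] by (simp add: mc_def rcl_def)
  have r2: "(mc ((\<Gamma>r, add_mset (Atom S [s]) \<Delta>r), \<pi>), mc ((\<Gamma>, add_mset E \<Delta>), \<pi>)) \<in> rcl"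
    using mlt[OF Dr am(2)] by (simp add: mc_def rcl_def)
  have pC: "preds_cc ((\<Gamma>, add_mset E \<Delta>), \<pi>) \<subseteq> preds N" using preds_cc_in[OF C] .
  have Gl: "asubst (Var(x := s)) ` set_mset \<Gamma>l \<subseteq> set_mset \<Gamma>" and Gr: "set_mset \<Gamma>r \<subseteq> set_mset \<Gamma>"
    using G by auto
  have "pred_a ` set_mset \<Gamma>l \<subseteq> pred_a ` set_mset \<Gamma>"
  proof
    fix P assume "P \<in> pred_a ` set_mset \<Gamma>l"
    then obtain A where "A \<in># \<Gamma>l" "P = pred_a A" by auto
    then show "P \<in> pred_a ` set_mset \<Gamma>" using Gl by (metis image_eqI image_subset_iff pred_asubst)
  qed
  note H = this
  have e1: "preds_cc ((add_mset (Atom S [Var x]) \<Gamma>l, add_mset (atom_replace E p (Var x)) \<Delta>l), \<pi>)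
     = insert (S, 1) (insert (pred_a E) (pred_a ` set_mset \<Gamma>l \<union> pred_a ` set_mset \<Delta>l))"
    by (simp add: pred_replace image_Un insert_commute)
  have e0: "preds_cc ((\<Gamma>, add_mset E \<Delta>), \<pi>) = insert (pred_a E) (pred_a ` set_mset \<Gamma> \<union> pred_a ` set_mset \<Delta>)"
    by (simp add: image_Un)
  have e2: "preds_cc ((\<Gamma>r, add_mset (Atom S [s]) \<Delta>r), \<pi>) = insert (S, 1) (pred_a ` set_mset \<Gamma>r \<union> pred_a ` set_mset \<Delta>r)"
    by (simp add: image_Un)
  have i1: "pred_a ` set_mset \<Delta>l \<subseteq> pred_a ` set_mset \<Delta>" using Dls by (rule image_mono)
  have i2: "pred_a ` set_mset \<Delta>r \<subseteq> pred_a ` set_mset \<Delta>" using Drs by (rule image_mono)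
  have i3: "pred_a ` set_mset \<Gamma>r \<subseteq> pred_a ` set_mset \<Gamma>" using Gr by (rule image_mono)
  have p1: "preds_cc ((add_mset (Atom S [Var x]) \<Gamma>l, add_mset (atom_replace E p (Var x)) \<Delta>l), \<pi>)
     \<subseteq> insert (S, 1) (preds_cc ((\<Gamma>, add_mset E \<Delta>), \<pi>))"
    unfolding e1 e0 using H i1 by blast
  have p2: "preds_cc ((\<Gamma>r, add_mset (Atom S [s]) \<Delta>r), \<pi>) \<subseteq> insert (S, 1) (preds_cc ((\<Gamma>, add_mset E \<Delta>), \<pi>))"
    unfolding e2 e0 using i2 i3 by blast
  have "\<forall>D\<in>{((add_mset (Atom S [Var x]) \<Gamma>l, add_mset (atom_replace E p (Var x)) \<Delta>l), \<pi>),
              ((\<Gamma>r, add_mset (Atom S [s]) \<Delta>r), \<pi>)}. {P \<in> preds_cc D. snd P \<noteq> 1} \<subseteq> nonmon N"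
  proof (intro ballI subsetI)
    fix D P assume D: "D \<in> {((add_mset (Atom S [Var x]) \<Gamma>l, add_mset (atom_replace E p (Var x)) \<Delta>l), \<pi>),
              ((\<Gamma>r, add_mset (Atom S [s]) \<Delta>r), \<pi>)}" and P: "P \<in> {P \<in> preds_cc D. snd P \<noteq> 1}"
    have "P \<in> preds_cc D" "snd P \<noteq> 1" using P by auto
    moreover have "preds_cc D \<subseteq> insert (S, 1) (preds_cc ((\<Gamma>, add_mset E \<Delta>), \<pi>))"
      using D p1 p2 by (elim insertE) auto
    ultimately have "P \<in> preds_cc ((\<Gamma>, add_mset E \<Delta>), \<pi>)" by auto
    then show "P \<in> nonmon N" using \<open>snd P \<noteq> 1\<close> pC unfolding nonmon_def by auto
  qed
  then have nm: "nonmon N' \<subseteq> nonmon N" unfolding N' by (rule nonmon_repl[OF C])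
  have "(mu N', mu N) \<in> mult rcl" unfolding N' using r1 r2 by (intro mu_step[OF fin C]) auto
  then show ?thesis using nm finite_nonmon[OF fin] by (intro measure_step)
qed

lemma LI_measure:
  assumes fin: "finite N" and C: "((\<Gamma>, add_mset E \<Delta>), \<pi>) \<in> N"
    and at: "atom_at E q = Some (Var x)"
    and x': "x' \<notin> vars_cc ((\<Gamma>, add_mset E \<Delta>), \<pi>)"
    and two: "2 \<le> ocm x (add_mset E \<Delta>)"
    and N': "N' = (N - {((\<Gamma>, add_mset E \<Delta>), \<pi>)}) \<union>
             {((image_mset (asubst (Var(x := Var x'))) \<Gamma> + \<Gamma>,
                add_mset (atom_replace E q (Var x')) \<Delta>), \<pi>')}"
  shows "(N', N) \<in> Wr"
proof -
  have x'': "x' \<notin> vars_ms (add_mset E \<Delta>)" using x' by auto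
  have r: "(mc ((image_mset (asubst (Var(x := Var x'))) \<Gamma> + \<Gamma>, add_mset (atom_replace E q (Var x')) \<Delta>), \<pi>'),
            mc ((\<Gamma>, add_mset E \<Delta>), \<pi>)) \<in> rcl"
    using am_replace_var[OF at, of x'] nl_LI[OF at x'' two] by (simp add: mc_def rcl_def)
  have pC: "preds_cc ((\<Gamma>, add_mset E \<Delta>), \<pi>) \<subseteq> preds N" using preds_cc_in[OF C] .
  have "\<forall>D\<in>{((image_mset (asubst (Var(x := Var x'))) \<Gamma> + \<Gamma>,
                add_mset (atom_replace E q (Var x')) \<Delta>), \<pi>')}. {P \<in> preds_cc D. snd P \<noteq> 1} \<subseteq> nonmon N"
    using pC unfolding nonmon_def by (auto simp: pred_replace pred_asubst)
  then have nm: "nonmon N' \<subseteq> nonmon N" unfolding N' by (rule nonmon_repl[OF C])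
  have "(mu N', mu N) \<in> mult rcl" unfolding N' using r by (intro mu_step[OF fin C]) auto
  then show ?thesis using nm finite_nonmon[OF fin] by (intro measure_step)
qed

lemma LI1_measure: "finite N \<Longrightarrow> LI1_step N N' \<Longrightarrow> (N', N) \<in> Wr"
proof -
  assume fin: "finite N" and "LI1_step N N'"
  then obtain \<Gamma> \<Delta> E' E p q x x' \<pi> where
    C: "((\<Gamma>, \<Delta> + {#E', E#}), \<pi>) \<in> N" and a1: "atom_at E' p = Some (Var x)" and a2: "atom_at E q = Some (Var x)"
    and x': "x' \<notin> vars_cc ((\<Gamma>, \<Delta> + {#E', E#}), \<pi>)"
    and N': "N' = (N - {((\<Gamma>, \<Delta> + {#E', E#}), \<pi>)}) \<union>
             {((image_mset (asubst (Var(x := Var x'))) \<Gamma> + \<Gamma>,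
                \<Delta> + {#E', atom_replace E q (Var x')#}),
               \<pi> @ constr_subst (Var(x := Var x')) \<pi>)}"
    unfolding LI1_step_def by blast
  have e1: "\<Delta> + {#E', E#} = add_mset E (add_mset E' \<Delta>)" by simp
  have e2: "\<Delta> + {#E', atom_replace E q (Var x')#} = add_mset (atom_replace E q (Var x')) (add_mset E' \<Delta>)" by simp
  have "2 \<le> aoc x E + aoc x E'" using aoc_sub[OF a1, of x] aoc_sub[OF a2, of x] by simp
  then have two: "2 \<le> ocm x (add_mset E (add_mset E' \<Delta>))" by (simp add: ocm_def)
  show ?thesis using C x' N' unfolding e1 e2 by (intro LI_measure[OF fin _ a2 _ two]) auto
qed

lemma LI2_measure: "finite N \<Longrightarrow> LI2_step N N' \<Longrightarrow> (N', N) \<in> Wr"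
proof -
  assume fin: "finite N" and "LI2_step N N'"
  then obtain \<Gamma> \<Delta> E p q x x' \<pi> where
    C: "((\<Gamma>, add_mset E \<Delta>), \<pi>) \<in> N" and a1: "atom_at E p = Some (Var x)" and a2: "atom_at E q = Some (Var x)"
    and pq: "p \<noteq> q"
    and x': "x' \<notin> vars_cc ((\<Gamma>, add_mset E \<Delta>), \<pi>)"
    and N': "N' = (N - {((\<Gamma>, add_mset E \<Delta>), \<pi>)}) \<union>
             {((image_mset (asubst (Var(x := Var x'))) \<Gamma> + \<Gamma>,
                add_mset (atom_replace E q (Var x')) \<Delta>),
               \<pi> @ constr_subst (Var(x := Var x')) \<pi>)}"
    unfolding LI2_step_def by blast
  have "2 \<le> aoc x E" using aoc_two[OF a1 a2 pq] .
  then have two: "2 \<le> ocm x (add_mset E \<Delta>)" by (simp add: ocm_def)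
  show ?thesis using C x' N' by (intro LI_measure[OF fin _ a2 _ two]) auto
qed

lemma MO_measure:
  assumes fin: "finite N" and st: "MO_step T fP N N'"
  shows "(N', N) \<in> Wr"
proof -
  from st obtain P where P: "P \<in> preds N" "snd P \<noteq> 1" and N': "N' = proj_cc T fP P ` N"
    unfolding MO_step_def by blast
  have pp: "pred_a (proj_a T fP P A) = (if pred_a A = P then (T, 1) else pred_a A)" for A
    by (cases A) auto
  have key: "Q \<in> preds_cc D \<and> Q \<noteq> P" if q1: "Q \<in> preds_cc (proj_cc T fP P D)" and q2: "snd Q \<noteq> 1" for Q D
  proof (cases D rule: preds_cc.cases)
    case (1 \<Gamma> \<Delta> \<pi>)
    then obtain A where A: "A \<in># \<Gamma> + \<Delta>" "Q = pred_a (proj_a T fP P A)" using q1 1 by auto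
    then show ?thesis using q2 1 pp[of A] by (auto split: if_splits)
  qed
  have "nonmon N' \<subseteq> nonmon N - {P}"
  proof
    fix Q assume "Q \<in> nonmon N'"
    then obtain D where "D \<in> N" "Q \<in> preds_cc (proj_cc T fP P D)" "snd Q \<noteq> 1"
      unfolding nonmon_def preds_def N' by auto
    then show "Q \<in> nonmon N - {P}" using key unfolding nonmon_def preds_def by blast
  qed
  moreover have "P \<in> nonmon N" using P by (simp add: nonmon_def)
  ultimately have "nonmon N' \<subset> nonmon N" by blast
  then have "card (nonmon N') < card (nonmon N)" using finite_nonmon[OF fin] by (rule psubset_card_mono[rotated])
  then show ?thesis by (simp add: Wr_def)
qed

lemma noref_measure: "finite N \<Longrightarrow> AP_noref_step T fP N N' \<Longrightarrow> (N', N) \<in> Wr"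
proof -
  assume f: "finite N" and st: "AP_noref_step T fP N N'"
  then have "MO_step T fP N N' \<or> SH_step T N N' \<or> LI1_step N N' \<or> LI2_step N N'"
    unfolding AP_noref_step_def by blast
  then show ?thesis
  proof (elim disjE)
    assume "MO_step T fP N N'" then show ?thesis by (rule MO_measure[OF f])
  next
    assume "SH_step T N N'" then show ?thesis by (rule SH_measure[OF f])
  next
    assume "LI1_step N N'" then show ?thesis by (rule LI1_measure[OF f])
  next
    assume "LI2_step N N'" then show ?thesis by (rule LI2_measure[OF f])
  qed
qed

lemma step_finite: "finite N \<Longrightarrow> AP_step T fP N N' \<Longrightarrow> finite N'"
proof -
  assume f: "finite N" and st: "AP_step T fP N N'"
  have "Ref_step N N' \<Longrightarrow> ?thesis" unfolding Ref_step_def using f by (elim exE conjE) simp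
  moreover have "MO_step T fP N N' \<Longrightarrow> ?thesis" unfolding MO_step_def using f by (elim bexE conjE) simp
  moreover have "SH_step T N N' \<Longrightarrow> ?thesis" unfolding SH_step_def using f by (elim exE conjE) simp
  moreover have "LI1_step N N' \<Longrightarrow> ?thesis" unfolding LI1_step_def using f by (elim exE conjE) simp
  moreover have "LI2_step N N' \<Longrightarrow> ?thesis" unfolding LI2_step_def using f by (elim exE conjE) simp
  ultimately show ?thesis using st unfolding AP_step_def AP_noref_step_def by blast
qed



lemma replace_sound:
  assumes "\<forall>D\<in>N'. sat_cc I D" "N' = (N - {C}) \<union> Ds" "(\<forall>D\<in>Ds. sat_cc I D) \<Longrightarrow> sat_cc I C"
  shows "\<forall>D\<in>N. sat_cc I D"
  using assms by blast

lemma step_sound: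
  assumes st: "AP_step T fP N N'" and sat: "satisfiable N'"
  shows "satisfiable N"
proof -
  from sat obtain I where gI: "\<forall>A\<in>I. ground_a A" and mI: "\<forall>D\<in>N'. sat_cc I D"
    unfolding satisfiable_def by blast
  have same: "satisfiable N" if "\<forall>D\<in>N. sat_cc I D"
    using that gI unfolding satisfiable_def by blast
  have "Ref_step N N' \<or> MO_step T fP N N' \<or> SH_step T N N' \<or> LI1_step N N' \<or> LI2_step N N'"
    using st unfolding AP_step_def AP_noref_step_def by blast
  then show ?thesis
  proof (elim disjE)
    assume "Ref_step N N'"
    then obtain C \<pi> x t where x: "x \<in> vars_cl C" and d: "vars_t t \<inter> vars_cc (C, \<pi>) = {}"
      and N': "N' = (N - {(C, \<pi>)}) \<union> {(C, \<pi> @ [(Var x, t)]),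
              (csubst (Var(x := t)) C, constr_subst (Var(x := t)) \<pi>)}"
      unfolding Ref_step_def by blast
    show ?thesis
      by (rule same, rule replace_sound[OF mI N']) (rule Ref_sound[OF _ _ x d]; blast)
  next
    assume "MO_step T fP N N'"
    then obtain P where N': "N' = proj_cc T fP P ` N" unfolding MO_step_def by blast
    have "\<forall>D\<in>N. sat_cc {A. ground_a A \<and> proj_a T fP P A \<in> I} D"
    proof
      fix D assume "D \<in> N"
      then have "proj_cc T fP P D \<in> N'" using N' by simp
      then have "sat_cc I (proj_cc T fP P D)" using mI by blast
      then show "sat_cc {A. ground_a A \<and> proj_a T fP P A \<in> I} D" by (rule MO_sound_cc)
    qed
    moreover have "\<forall>A\<in>{A. ground_a A \<and> proj_a T fP P A \<in> I}. ground_a A" by simp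
    ultimately show ?thesis unfolding satisfiable_def by blast
  next
    assume "SH_step T N N'"
    then obtain \<Gamma> \<Delta> E p s \<pi> x S \<Gamma>l \<Delta>l \<Gamma>r \<Delta>r where
      at: "atom_at E p = Some s"
      and x: "x \<notin> vars_cc ((\<Gamma>, add_mset E \<Delta>), \<pi>)"
      and G: "image_mset (asubst (Var(x := s))) \<Gamma>l \<union># \<Gamma>r = \<Gamma>"
      and D: "\<Delta>l \<union># \<Delta>r = \<Delta>"
      and N': "N' = (N - {((\<Gamma>, add_mset E \<Delta>), \<pi>)}) \<union>
             {((add_mset (Atom S [Var x]) \<Gamma>l, add_mset (atom_replace E p (Var x)) \<Delta>l), \<pi>),
              ((\<Gamma>r, add_mset (Atom S [s]) \<Delta>r), \<pi>)}"
      unfolding SH_step_def by blast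
    show ?thesis
      by (rule same, rule replace_sound[OF mI N']) (rule SH_sound[OF _ _ at x G D]; blast)
  next
    assume "LI1_step N N'"
    then obtain \<Gamma> \<Delta> E' E p q x x' \<pi> where
      a2: "atom_at E q = Some (Var x)"
      and x': "x' \<notin> vars_cc ((\<Gamma>, \<Delta> + {#E', E#}), \<pi>)"
      and N': "N' = (N - {((\<Gamma>, \<Delta> + {#E', E#}), \<pi>)}) \<union>
             {((image_mset (asubst (Var(x := Var x'))) \<Gamma> + \<Gamma>,
                \<Delta> + {#E', atom_replace E q (Var x')#}),
               \<pi> @ constr_subst (Var(x := Var x')) \<pi>)}"
      unfolding LI1_step_def by blast
    have e1: "\<Delta> + {#E', E#} = add_mset E (add_mset E' \<Delta>)" by simp
    have e2: "\<Delta> + {#E', atom_replace E q (Var x')#} = add_mset (atom_replace E q (Var x')) (add_mset E' \<Delta>)" by simp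
    show ?thesis
      by (rule same, rule replace_sound[OF mI N']) (unfold e1, rule LI_sound[OF _ a2 x'[unfolded e1]], unfold e2[symmetric], blast)
  next
    assume "LI2_step N N'"
    then obtain \<Gamma> \<Delta> E p q x x' \<pi> where
      a2: "atom_at E q = Some (Var x)"
      and x': "x' \<notin> vars_cc ((\<Gamma>, add_mset E \<Delta>), \<pi>)"
      and N': "N' = (N - {((\<Gamma>, add_mset E \<Delta>), \<pi>)}) \<union>
             {((image_mset (asubst (Var(x := Var x'))) \<Gamma> + \<Gamma>,
                add_mset (atom_replace E q (Var x')) \<Delta>),
               \<pi> @ constr_subst (Var(x := Var x')) \<pi>)}"
      unfolding LI2_step_def by blast
    show ?thesis
      by (rule same, rule replace_sound[OF mI N']) (rule LI_sound[OF _ a2 x']; blast)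
  qed
qed



theorem lemma6:
  fixes N :: "('p, 'f, 'v) cclause set"
    and T :: 'p
    and fP :: "'p \<times> nat \<Rightarrow> 'f"
  assumes fin: "finite N"
    and wf: "\<forall>C \<in> N. wf_cclause C"
    and T_fresh: "(T, 1) \<notin> preds N"
    and fP_fresh: "\<forall>P. snd P \<noteq> 1 \<longrightarrow> (fP P, snd P) \<notin> funs N"
    and fP_inj: "inj_on fP {P. snd P \<noteq> 1}"
  shows "\<not> (\<exists>Ns :: nat \<Rightarrow> ('p, 'f, 'v) cclause set.
              Ns 0 = N \<and> (\<forall>i. AP_step T fP (Ns i) (Ns (Suc i))) \<and>
              (\<exists>k. \<forall>i \<ge> k. AP_noref_step T fP (Ns i) (Ns (Suc i)))) \<and>
         (\<forall>N'. AP_step T fP N N' \<and> satisfiable N' \<longrightarrow> satisfiable N)"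
proof (intro conjI allI impI notI)
  assume "\<exists>Ns :: nat \<Rightarrow> ('p, 'f, 'v) cclause set.
              Ns 0 = N \<and> (\<forall>i. AP_step T fP (Ns i) (Ns (Suc i))) \<and>
              (\<exists>k. \<forall>i \<ge> k. AP_noref_step T fP (Ns i) (Ns (Suc i)))"
  then obtain Ns :: "nat \<Rightarrow> ('p, 'f, 'v) cclause set" and k where
    N0: "Ns 0 = N" and steps: "\<forall>i. AP_step T fP (Ns i) (Ns (Suc i))"
    and nr: "\<forall>i \<ge> k. AP_noref_step T fP (Ns i) (Ns (Suc i))" by blast
  have finNs: "finite (Ns i)" for i
  proof (induction i)
    case 0 then show ?case using N0 fin by simp
  next
    case (Suc i) then show ?case using steps by (intro step_finite[OF Suc]) blast
  qed
  define g where "g i = Ns (k + i)" for i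
  have "\<forall>i. (g (Suc i), g i) \<in> Wr"
  proof
    fix i
    have "AP_noref_step T fP (Ns (k + i)) (Ns (Suc (k + i)))" using nr[rule_format, of "k + i"] by simp
    then have "(Ns (Suc (k + i)), Ns (k + i)) \<in> Wr" by (rule noref_measure[OF finNs])
    then show "(g (Suc i), g i) \<in> Wr" by (simp add: g_def)
  qed
  then show False using wf_Wr unfolding wf_iff_no_infinite_down_chain by blast
next
  fix N' assume h: "AP_step T fP N N' \<and> satisfiable N'"
  show "satisfiable N" by (rule step_sound[OF conjunct1[OF h] conjunct2[OF h]])
qed

end
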